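(* Let $t\ge1$, $t\le k\le v$, $\lambda\ge1$ be integers and suppose there exists a $t$-$(v,k,\lambda)$ design whose number of blocks $b=\lambda\binom{v}{t}/\binom{k}{t}$ is divisible by $v$. Then there exists an authentication system with $k$ source states, $v$ messages and $b$ encoding rules which, when the source states are equiprobable and the encoding rules are used with equal probability, has perfect secrecy and is $(t-1)$-fold secure against spoofing in the verification oracle model. Moreover, the system is optimal (i.e. $b=\binom{v}{t}/\binom{k}{t}$) if and only if $\lambda=1$.
   Context: A $t$-$(v,k,\lambda)$ design is a pair $(X,\mathcal{B})$ where $X$ is a set of $v$ points and $\mathcal{B}$ is a collection of distinct $k$-subsets of $X$ (blocks) such that every $t$-subset of $X$ is contained in exactly $\lambda$ blocks; $b=|\mathcal{B}|$. Authentication system: finite sets $\mathcal{S}$ of $k$ source states, $\mathcal{M}$ of $v$ messages, $\mathcal{E}$ of $b$ encoding rules, each $e\in\mathcal{E}$ an injective map $\mathcal{S}\to\mathcal{M}$; $M(e)=\{e(s):s\in\mathcal{S}\}$ is the set of messages valid (accepted) under $e$. A key $e$ is drawn according to $p_E$, source states according to $p_S$, independently; "equiprobable source states" means independent and uniformly distributed source states. Perfect secrecy: $p_S(s\mid m)=p_S(s)$ for every source state $s$ and message $m$. Verification oracle (V-oracle) model: for a secret key $e$, the opponent may adaptively submit query messages $m$ to an oracle which answers "accept" if $m\in M(e)$ and "reject" otherwise. In an offline spoofing attack of order $i$, the opponent makes $i$ adaptive queries and then outputs a message distinct from all queried ones, succeeding if it lies in $M(e)$; $P^{\mathrm{offline}}_{d_i}$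 denotes the maximal success probability over strategies. In an online attack of order $i$, the opponent succeeds as soon as one of his $i+1$ distinct submitted messages is accepted; $P^{\mathrm{online}}_{d_i}$ is the maximal success probability. One always has $P^{\mathrm{offline}}_{d_i}\ge k/v$ and $P^{\mathrm{online}}_{d_i}\ge 1-\binom{v-k}{i+1}/\binom{v}{i+1}$, and equality in one is equivalent to equality in the other. The system is $t$-fold secure against spoofing in the V-oracle model if $P^{\mathrm{offline}}_{d_t}=k/v$ (equivalently $P^{\mathrm{online}}_{d_t}=1-\binom{v-k}{t+1}/\binom{v}{t+1}$). A $(t-1)$-fold secure system in this model has $b\ge\binom{v}{t}/\binom{k}{t}$; it is optimal if equality holds. *)

theory Defs
  imports Complex_Main
begin

definition is_design :: "nat \<Rightarrow> nat \<Rightarrow> nat \<Rightarrow> nat \<Rightarrow> 'a set \<Rightarrow> 'a set set \<Rightarrow> bool" where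
  "is_design t v k lam X B \<longleftrightarrow>
     finite X \<and> card X = v \<and> (\<forall>Bl\<in>B. Bl \<subseteq> X \<and> card Bl = k) \<and>
     (\<forall>T. T \<subseteq> X \<and> card T = t \<longrightarrow> card {Bl\<in>B. T \<subseteq> Bl} = lam)"

definition auth_system :: "'s set \<Rightarrow> 'm set \<Rightarrow> 'e set \<Rightarrow> ('e \<Rightarrow> 's \<Rightarrow> 'm) \<Rightarrow> bool" where
  "auth_system S M E enc \<longleftrightarrow> finite S \<and> finite M \<and> finite E \<and>
     (\<forall>e\<in>E. inj_on (enc e) S \<and> enc e ` S \<subseteq> M)"

definition valid_msgs :: "'s set \<Rightarrow> ('e \<Rightarrow> 's \<Rightarrow> 'm) \<Rightarrow> 'e \<Rightarrow> 'm set" where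
  "valid_msgs S enc e = enc e ` S"

definition p_SM :: "'s set \<Rightarrow> 'e set \<Rightarrow> ('e \<Rightarrow> 's \<Rightarrow> 'm) \<Rightarrow> ('s \<Rightarrow> real) \<Rightarrow> ('e \<Rightarrow> real) \<Rightarrow> 's \<Rightarrow> 'm \<Rightarrow> real" where
  "p_SM S E enc pS pE s m = (\<Sum>e\<in>{e\<in>E. enc e s = m}. pE e) * pS s"

definition p_M :: "'s set \<Rightarrow> 'e set \<Rightarrow> ('e \<Rightarrow> 's \<Rightarrow> 'm) \<Rightarrow> ('s \<Rightarrow> real) \<Rightarrow> ('e \<Rightarrow> real) \<Rightarrow> 'm \<Rightarrow> real" where
  "p_M S E enc pS pE m = (\<Sum>s\<in>S. p_SM S E enc pS pE s m)"

text \<open>Perfect secrecy p(s|m) = p(s), written multiplicatively p(s,m) = p(s) p(m)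
  (equivalent whenever p(m) > 0, and the conditional is undefined otherwise).\<close>
definition perfect_secrecy :: "'s set \<Rightarrow> 'm set \<Rightarrow> 'e set \<Rightarrow> ('e \<Rightarrow> 's \<Rightarrow> 'm) \<Rightarrow> ('s \<Rightarrow> real) \<Rightarrow> ('e \<Rightarrow> real) \<Rightarrow> bool" where
  "perfect_secrecy S M E enc pS pE \<longleftrightarrow>
     (\<forall>s\<in>S. \<forall>m\<in>M. p_SM S E enc pS pE s m = pS s * p_M S E enc pS pE m)"

text \<open>A (deterministic) strategy q maps the history of
  (query, answer) pairs so far to the next message. vhist q A n is the history after
  n queries when the valid-message set of the secret key is A.\<close>
fun vhist :: "(('m \<times> bool) list \<Rightarrow> 'm) \<Rightarrow> 'm set \<Rightarrow> nat \<Rightarrow> ('m \<times> bool) list" where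
  "vhist q A 0 = []"
| "vhist q A (Suc n) = vhist q A n @ [(q (vhist q A n), q (vhist q A n) \<in> A)]"

definition offline_out :: "(('m \<times> bool) list \<Rightarrow> 'm) \<Rightarrow> 'm set \<Rightarrow> nat \<Rightarrow> 'm" where
  "offline_out q A i = q (vhist q A i)"

definition offline_strategy :: "'s set \<Rightarrow> 'm set \<Rightarrow> 'e set \<Rightarrow> ('e \<Rightarrow> 's \<Rightarrow> 'm) \<Rightarrow> nat \<Rightarrow> (('m \<times> bool) list \<Rightarrow> 'm) \<Rightarrow> bool" where
  "offline_strategy S M E enc i q \<longleftrightarrow> (\<forall>h. q h \<in> M) \<and>
     (\<forall>e\<in>E. offline_out q (valid_msgs S enc e) i \<notin> fst ` set (vhist q (valid_msgs S enc e) i))"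

definition offline_success :: "'s set \<Rightarrow> 'e set \<Rightarrow> ('e \<Rightarrow> 's \<Rightarrow> 'm) \<Rightarrow> ('e \<Rightarrow> real) \<Rightarrow> nat \<Rightarrow> (('m \<times> bool) list \<Rightarrow> 'm) \<Rightarrow> real" where
  "offline_success S E enc pE i q =
     (\<Sum>e\<in>E. if offline_out q (valid_msgs S enc e) i \<in> valid_msgs S enc e then pE e else 0)"

definition P_offline :: "'s set \<Rightarrow> 'm set \<Rightarrow> 'e set \<Rightarrow> ('e \<Rightarrow> 's \<Rightarrow> 'm) \<Rightarrow> ('e \<Rightarrow> real) \<Rightarrow> nat \<Rightarrow> real" where
  "P_offline S M E enc pE i =
     Sup (offline_success S E enc pE i ` {q. offline_strategy S M E enc i q})"

definition V_secure :: "'s set \<Rightarrow> 'm set \<Rightarrow> 'e set \<Rightarrow> ('e \<Rightarrow> 's \<Rightarrow> 'm) \<Rightarrow> ('e \<Rightarrow> real) \<Rightarrow> nat \<Rightarrow> bool" where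
  "V_secure S M E enc pE t \<longleftrightarrow> P_offline S M E enc pE t = real (card S) / real (card M)"

end

theory Submission
  imports Defs
begin

lemma card_swap:
  assumes "finite P" "finite Q"
  shows "(\<Sum>x\<in>P. card {y\<in>Q. R x y}) = (\<Sum>y\<in>Q. card {x\<in>P. R x y})"
proof -
  have "card {y\<in>Q. R x y} = (\<Sum>y\<in>Q. if R x y then 1 else 0)" for x
    using sum.inter_filter[OF assms(2), of "\<lambda>_. 1::nat" "R x"] by simp
  moreover have "card {x\<in>P. R x y} = (\<Sum>x\<in>P. if R x y then 1 else 0)" for y
    using sum.inter_filter[OF assms(1), of "\<lambda>_. 1::nat" "\<lambda>x. R x y"] by simp
  ultimately show ?thesis using sum.swap by simp
qed

lemma hall:
  fixes A :: "'i \<Rightarrow> 'b set"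
  assumes "finite J" "\<forall>j\<in>J. finite (A j)" "\<forall>K\<subseteq>J. card K \<le> card (\<Union> (A ` K))"
  shows "\<exists>f. inj_on f J \<and> (\<forall>j\<in>J. f j \<in> A j)"
  using assms
proof (induction "card J" arbitrary: J A rule: less_induct)
  case less
  show ?case
  proof (cases "J = {}")
    case True then show ?thesis by auto
  next
    case Jne: False
    show ?thesis
    proof (cases "\<forall>K. K \<subseteq> J \<and> K \<noteq> {} \<and> K \<noteq> J \<longrightarrow> card K < card (\<Union> (A ` K))")
      case True
      obtain j0 where j0: "j0 \<in> J" using Jne by auto
      have "card {j0} \<le> card (\<Union> (A ` {j0}))" using less.prems(3) j0 by blast
      then have "A j0 \<noteq> {}" by auto
      then obtain x where x: "x \<in> A j0" by auto
      define J' where "J' = J - {j0}"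
      define A' where "A' = (\<lambda>j. A j - {x})"
      have cJ: "card J' < card J" unfolding J'_def using j0 less.prems(1)
        by (meson card_Diff1_less)
      have "\<forall>K\<subseteq>J'. card K \<le> card (\<Union> (A' ` K))"
      proof (intro allI impI)
        fix K assume K: "K \<subseteq> J'"
        show "card K \<le> card (\<Union> (A' ` K))"
        proof (cases "K = {}")
          case True then show ?thesis by simp
        next
          case False
          have "K \<noteq> J" using K j0 unfolding J'_def by auto
          moreover have "K \<subseteq> J" using K unfolding J'_def by auto
          ultimately have lt: "card K < card (\<Union> (A ` K))" using True False by blast
          have eq: "\<Union> (A' ` K) = \<Union> (A ` K) - {x}" unfolding A'_def by auto
          have fin: "finite (\<Union> (A ` K))" using \<open>K \<subseteq> J\<close> less.prems(1,2)
            by (meson finite_UN_I finite_subset subsetD)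
          have cc: "card (\<Union> (A ` K)) - 1 \<le> card (\<Union> (A ` K) - {x})"
            by (simp add: card_Diff_singleton_if fin)
          show ?thesis unfolding eq using lt cc by linarith
        qed
      qed
      moreover have "finite J'" using less.prems(1) J'_def by auto
      moreover have "\<forall>j\<in>J'. finite (A' j)" using less.prems(2) unfolding J'_def A'_def by auto
      ultimately obtain f' where f': "inj_on f' J'" "\<forall>j\<in>J'. f' j \<in> A' j"
        using less.hyps[OF cJ] by blast
      define f where "f = f'(j0 := x)"
      have "inj_on f J"
      proof -
        have "J = insert j0 J'" using j0 J'_def by auto
        moreover have "inj_on f J'" using f'(1) unfolding f_def J'_def
          by (simp add: inj_on_def)
        moreover have "f j0 \<notin> f ` J'" using f'(2) unfolding f_def A'_def J'_def by auto
        moreover have "j0 \<notin> J'" using J'_def by auto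
        ultimately show ?thesis by simp
      qed
      moreover have "\<forall>j\<in>J. f j \<in> A j" using f'(2) x unfolding f_def A'_def J'_def by auto
      ultimately show ?thesis by blast
    next
      case False
      then obtain K where K: "K \<subseteq> J" "K \<noteq> {}" "K \<noteq> J" "\<not> card K < card (\<Union> (A ` K))" by blast
      define U where "U = \<Union> (A ` K)"
      have cU: "card U = card K" using K less.prems(3) unfolding U_def by (meson le_antisym not_le)
      have finK: "finite K" using K(1) less.prems(1) finite_subset by blast
      have cK: "card K < card J" using K less.prems(1) by (meson psubsetI psubset_card_mono)
      obtain f1 where f1: "inj_on f1 K" "\<forall>j\<in>K. f1 j \<in> A j"
        using less.hyps[OF cK finK, of A] less.prems K(1) by auto
      define J2 where "J2 = J - K"
      define A2 where "A2 = (\<lambda>j. A j - U)"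
      have cJ2: "card J2 < card J" proof -
        have "card K > 0" using finK K(2) by auto
        then show ?thesis using K(1) finK less.prems(1) card_mono[OF less.prems(1) K(1)] by (simp add: J2_def card_Diff_subset)
      qed
      have "\<forall>L\<subseteq>J2. card L \<le> card (\<Union> (A2 ` L))"
      proof (intro allI impI)
        fix L assume L: "L \<subseteq> J2"
        have KL: "K \<union> L \<subseteq> J" using L K unfolding J2_def by auto
        have finKL: "finite (\<Union> (A ` (K \<union> L)))" using KL less.prems(1,2)
          by (meson finite_UN_I finite_subset subsetD)
        have eq: "\<Union> (A2 ` L) = \<Union> (A ` (K \<union> L)) - U" unfolding A2_def U_def by auto
        have sub: "U \<subseteq> \<Union> (A ` (K \<union> L))" unfolding U_def by auto
        have c1: "card (\<Union> (A2 ` L)) = card (\<Union> (A ` (K \<union> L))) - card U"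
          using eq sub finKL by (simp add: card_Diff_subset finite_subset)
        have "card (K \<union> L) \<le> card (\<Union> (A ` (K \<union> L)))" using KL less.prems(3) by blast
        moreover have "card (K \<union> L) = card K + card L"
          using L finK less.prems(1) unfolding J2_def
          by (intro card_Un_disjoint) (auto intro: finite_subset)
        ultimately show "card L \<le> card (\<Union> (A2 ` L))" using c1 cU by linarith
      qed
      moreover have "finite J2" using less.prems(1) J2_def by auto
      moreover have "\<forall>j\<in>J2. finite (A2 j)" using less.prems(2) unfolding J2_def A2_def by auto
      ultimately obtain f2 where f2: "inj_on f2 J2" "\<forall>j\<in>J2. f2 j \<in> A2 j"
        using less.hyps[OF cJ2] by blast
      define f where "f = (\<lambda>j. if j \<in> K then f1 j else f2 j)"
      have "inj_on f J"
        unfolding inj_on_def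
      proof (intro ballI impI)
        fix x y assume xy: "x \<in> J" "y \<in> J" "f x = f y"
        show "x = y"
        proof (cases "x \<in> K"; cases "y \<in> K")
          assume "x \<in> K" "y \<in> K" then show ?thesis using xy f1(1) unfolding f_def inj_on_def by auto
        next
          assume a: "x \<in> K" "y \<notin> K"
          have "f x \<in> U" using f1(2) a unfolding f_def U_def by auto
          moreover have "f y \<notin> U" using f2(2) a xy(2) unfolding f_def A2_def J2_def by auto
          ultimately show ?thesis using xy by simp
        next
          assume a: "x \<notin> K" "y \<in> K"
          have "f y \<in> U" using f1(2) a unfolding f_def U_def by auto
          moreover have "f x \<notin> U" using f2(2) a xy(1) unfolding f_def A2_def J2_def by auto
          ultimately show ?thesis using xy by simp
        next
          assume "x \<notin> K" "y \<notin> K" then show ?thesis using xy f2(1) unfolding f_def inj_on_def J2_def by auto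
        qed
      qed
      moreover have "\<forall>j\<in>J. f j \<in> A j" using f1(2) f2(2) unfolding f_def A2_def J2_def by auto
      ultimately show ?thesis by blast
    qed
  qed
qed


lemma select_cfold:
  fixes F :: "nat \<Rightarrow> nat set"
  assumes Fs: "\<forall>j<b. F j \<subseteq> {0..<v} \<and> card (F j) = Suc k"
    and deg: "\<forall>x<v. card {j\<in>{0..<b}. x \<in> F j} = Suc k * c"
    and bv: "b = v * c"
  shows "\<exists>f. (\<forall>j<b. f j \<in> F j) \<and> (\<forall>x<v. card {j\<in>{0..<b}. f j = x} = c)"
proof -
  define A where "A = (\<lambda>j. F j \<times> {0..<c})"
  have finF: "finite (F j)" if "j<b" for j using Fs that by (metis card.infinite nat.distinct(1))
  have finA: "\<forall>j\<in>{0..<b}. finite (A j)" using finF unfolding A_def by auto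
  have cardA: "card (A j) = Suc k * c" if "j < b" for j
    using Fs that unfolding A_def by (simp add: card_cartesian_product)
  have hallc: "\<forall>K\<subseteq>{0..<b}. card K \<le> card (\<Union> (A ` K))"
  proof (intro allI impI)
    fix K assume K: "K \<subseteq> {0..<b}"
    define U where "U = \<Union> (A ` K)"
    have finK: "finite K" using K finite_subset by blast
    have UV: "U \<subseteq> {0..<v} \<times> {0..<c}" unfolding U_def A_def using Fs K by fastforce
    have finU: "finite U" using UV finite_subset by blast
    have "(\<Sum>j\<in>K. card {p\<in>U. p \<in> A j}) = (\<Sum>p\<in>U. card {j\<in>K. p \<in> A j})"
      by (rule card_swap[OF finK finU])
    moreover have "(\<Sum>j\<in>K. card {p\<in>U. p \<in> A j}) = card K * (Suc k * c)"
    proof -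
      have "{p\<in>U. p \<in> A j} = A j" if "j \<in> K" for j using that unfolding U_def by auto
      then have "(\<Sum>j\<in>K. card {p\<in>U. p \<in> A j}) = (\<Sum>j\<in>K. Suc k * c)"
        using cardA K by (intro sum.cong) auto
      then show ?thesis by simp
    qed
    moreover have "(\<Sum>p\<in>U. card {j\<in>K. p \<in> A j}) \<le> (\<Sum>p\<in>U. Suc k * c)"
    proof (rule sum_mono)
      fix p assume p: "p \<in> U"
      have "{j\<in>K. p \<in> A j} \<subseteq> {j\<in>{0..<b}. fst p \<in> F j}" using K unfolding A_def by auto
      then have "card {j\<in>K. p \<in> A j} \<le> card {j\<in>{0..<b}. fst p \<in> F j}" by (intro card_mono) auto
      moreover have "fst p < v" using p UV by auto
      ultimately show "card {j\<in>K. p \<in> A j} \<le> Suc k * c" using deg by auto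
    qed
    ultimately have "card K * (Suc k * c) \<le> card U * (Suc k * c)" by simp
    moreover have "c > 0 \<or> K = {}" using K bv by auto
    ultimately show "card K \<le> card (\<Union> (A ` K))" unfolding U_def by auto
  qed
  obtain g where g: "inj_on g {0..<b}" "\<forall>j\<in>{0..<b}. g j \<in> A j"
    using hall[of "{0..<b}" A] finA hallc by auto
  have sub: "g ` {0..<b} \<subseteq> {0..<v} \<times> {0..<c}" using g(2) Fs unfolding A_def by fastforce
  have "card (g ` {0..<b}) = card ({0..<v} \<times> {0..<c})"
    using card_image[OF g(1)] bv by (simp add: card_cartesian_product)
  then have img: "g ` {0..<b} = {0..<v} \<times> {0..<c}" using sub by (intro card_subset_eq) auto
  define f where "f = (\<lambda>j. fst (g j))"
  have "\<forall>j<b. f j \<in> F j" using g(2) unfolding f_def A_def by force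
  moreover have "card {j\<in>{0..<b}. f j = x} = c" if "x < v" for x
  proof -
    have gimg: "g ` {j\<in>{0..<b}. f j = x} = {x} \<times> {0..<c}"
    proof
      show "g ` {j \<in> {0..<b}. f j = x} \<subseteq> {x} \<times> {0..<c}"
      proof (rule image_subsetI)
        fix j assume j: "j \<in> {j \<in> {0..<b}. f j = x}"
        then have "g j \<in> g ` {0..<b}" by auto
        then have "g j \<in> {0..<v} \<times> {0..<c}" using img by simp
        then show "g j \<in> {x} \<times> {0..<c}" using j unfolding f_def by (cases "g j") auto
      qed
      show "{x} \<times> {0..<c} \<subseteq> g ` {j \<in> {0..<b}. f j = x}"
      proof
        fix p assume p: "p \<in> {x} \<times> {0..<c}"
        then have "p \<in> g ` {0..<b}" using img that by auto
        then obtain j where "j \<in> {0..<b}" "p = g j" by auto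
        then show "p \<in> g ` {j \<in> {0..<b}. f j = x}" using p unfolding f_def by auto
      qed
    qed
    have "inj_on g {j\<in>{0..<b}. f j = x}" using g(1) by (rule inj_on_subset) auto
    then have "card {j\<in>{0..<b}. f j = x} = card (g ` {j\<in>{0..<b}. f j = x})" by (simp add: card_image)
    also have "\<dots> = card ({x} \<times> {0..<c})" using gimg by simp
    also have "\<dots> = c" by (simp add: card_cartesian_product)
    finally show ?thesis .
  qed
  ultimately show ?thesis by blast
qed

lemma ordering_exists:
  "\<forall>F::nat \<Rightarrow> nat set. (\<forall>j<(b::nat). F j \<subseteq> {0..<(v::nat)} \<and> card (F j) = (k::nat)) \<longrightarrow>
     (\<forall>x<v. card {j\<in>{0..<b}. x \<in> F j} = k * c) \<longrightarrow> b = v * c \<longrightarrow>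
     (\<exists>\<sigma>. (\<forall>j<b. bij_betw (\<sigma> j) {0..<k} (F j)) \<and>
          (\<forall>x<v. \<forall>s<k. card {j\<in>{0..<b}. \<sigma> j s = x} = c))"
proof (induction k)
  case 0
  show ?case
  proof (intro allI impI)
    fix F :: "nat \<Rightarrow> nat set"
    assume a: "\<forall>j<b. F j \<subseteq> {0..<v} \<and> card (F j) = 0"
    have "F j = {}" if "j < b" for j using a that by (meson card_0_eq finite_atLeastLessThan finite_subset)
    then show "\<exists>\<sigma>. (\<forall>j<b. bij_betw (\<sigma> j) {0..<(0::nat)} (F j)) \<and> (\<forall>x<v. \<forall>s<(0::nat). card {j \<in> {0..<b}. \<sigma> j s = x} = c)"
    proof -
      let ?\<sigma> = "\<lambda>(j::nat) (s::nat). 0::nat"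
      have "(\<forall>j<b. bij_betw (?\<sigma> j) {0..<(0::nat)} (F j)) \<and> (\<forall>x<v. \<forall>s<(0::nat). card {j \<in> {0..<b}. ?\<sigma> j s = x} = c)"
        using \<open>\<And>j. j < b \<Longrightarrow> F j = {}\<close> by (simp add: bij_betw_def)
      then show ?thesis by (rule exI[where x="?\<sigma>"])
    qed
  qed
next
  case (Suc k)
  show ?case
  proof (intro allI impI)
    fix F :: "nat \<Rightarrow> nat set"
    assume Fs: "\<forall>j<b. F j \<subseteq> {0..<v} \<and> card (F j) = Suc k"
      and deg: "\<forall>x<v. card {j\<in>{0..<b}. x \<in> F j} = Suc k * c" and bv: "b = v * c"
    obtain f where f: "\<forall>j<b. f j \<in> F j" "\<forall>x<v. card {j\<in>{0..<b}. f j = x} = c"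
      using select_cfold[OF Fs deg bv] by blast
    define F' where "F' = (\<lambda>j. F j - {f j})"
    have finF: "finite (F j)" if "j < b" for j using Fs that by (meson finite_atLeastLessThan finite_subset)
    have Fs': "\<forall>j<b. F' j \<subseteq> {0..<v} \<and> card (F' j) = k"
    proof (intro allI impI)
      fix j assume j: "j < b"
      have "card (F j - {f j}) = k" using Fs f(1) finF j by (simp add: card_Diff_singleton)
      then show "F' j \<subseteq> {0..<v} \<and> card (F' j) = k" using Fs j unfolding F'_def by auto
    qed
    have deg': "\<forall>x<v. card {j\<in>{0..<b}. x \<in> F' j} = k * c"
    proof (intro allI impI)
      fix x assume x: "x < v"
      have eq: "{j\<in>{0..<b}. x \<in> F' j} = {j\<in>{0..<b}. x \<in> F j} - {j\<in>{0..<b}. f j = x}"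
        unfolding F'_def by auto
      have sub: "{j\<in>{0..<b}. f j = x} \<subseteq> {j\<in>{0..<b}. x \<in> F j}" using f(1) by auto
      show "card {j\<in>{0..<b}. x \<in> F' j} = k * c"
        unfolding eq using card_Diff_subset[OF _ sub] deg f(2) x by simp
    qed
    obtain \<sigma>' where s': "\<forall>j<b. bij_betw (\<sigma>' j) {0..<k} (F' j)"
        "\<forall>x<v. \<forall>s<k. card {j\<in>{0..<b}. \<sigma>' j s = x} = c"
      using Suc.IH[THEN spec[where x=F'], THEN mp, OF Fs', THEN mp, OF deg', THEN mp, OF bv] by blast
    define \<sigma> where "\<sigma> = (\<lambda>j s. if s = k then f j else \<sigma>' j s)"
    have "bij_betw (\<sigma> j) {0..<Suc k} (F j)" if j: "j < b" for j
    proof -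
      have "bij_betw (\<sigma> j) {0..<k} (F' j) = bij_betw (\<sigma>' j) {0..<k} (F' j)"
        by (rule bij_betw_cong) (simp add: \<sigma>_def)
      then have b1: "bij_betw (\<sigma> j) {0..<k} (F' j)" using s'(1) j by simp
      have "bij_betw (\<sigma> j) ({0..<k} \<union> {k}) (F' j \<union> {\<sigma> j k})"
        by (rule notIn_Un_bij_betw[OF _ _ b1]) (auto simp: \<sigma>_def F'_def)
      moreover have "{0..<k} \<union> {k} = {0..<Suc k}" by auto
      moreover have "F' j \<union> {\<sigma> j k} = F j" using f(1) j unfolding \<sigma>_def F'_def by auto
      ultimately show ?thesis by simp
    qed
    moreover have "card {j\<in>{0..<b}. \<sigma> j s = x} = c" if "x < v" "s < Suc k" for x s
    proof (cases "s = k")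
      case True then show ?thesis using f(2) that by (simp add: \<sigma>_def)
    next
      case False then show ?thesis using s'(2) that by (simp add: \<sigma>_def)
    qed
    ultimately show "\<exists>\<sigma>. (\<forall>j<b. bij_betw (\<sigma> j) {0..<Suc k} (F j)) \<and>
          (\<forall>x<v. \<forall>s<Suc k. card {j\<in>{0..<b}. \<sigma> j s = x} = c)"
      by (intro exI[where x=\<sigma>] conjI allI impI) auto
  qed
qed

locale idesign =
  fixes t v k lam b :: nat and F :: "nat \<Rightarrow> nat set"
  assumes t1: "1 \<le> t" and tk: "t \<le> k" and kv: "k \<le> v"
    and Fsub: "\<And>j. j < b \<Longrightarrow> F j \<subseteq> {0..<v}"
    and Fcard: "\<And>j. j < b \<Longrightarrow> card (F j) = k"
    and Fdes: "\<And>T. T \<subseteq> {0..<v} \<Longrightarrow> card T = t \<Longrightarrow> card {j\<in>{0..<b}. T \<subseteq> F j} = lam"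
begin

definition cons :: "nat set \<Rightarrow> nat set \<Rightarrow> nat set" where
  "cons A R = {j\<in>{0..<b}. A \<subseteq> F j \<and> F j \<inter> R = {}}"

lemma finF: "j < b \<Longrightarrow> finite (F j)"
  using Fsub finite_subset by blast

lemma sub_const:
  assumes "s \<le> t"
  shows "\<exists>c. \<forall>S. S \<subseteq> {0..<v} \<longrightarrow> card S = s \<longrightarrow> card {j\<in>{0..<b}. S \<subseteq> F j} = c"
  using assms
proof (induction rule: inc_induct)
  case base
  then show ?case using Fdes by blast
next
  case (step n)
  then obtain c where c: "\<forall>S. S \<subseteq> {0..<v} \<longrightarrow> card S = Suc n \<longrightarrow> card {j\<in>{0..<b}. S \<subseteq> F j} = c"
    by blast
  have "card {j\<in>{0..<b}. S \<subseteq> F j} = (v - n) * c div (k - n)"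
    if S: "S \<subseteq> {0..<v}" "card S = n" for S
  proof -
    define Q where "Q = {j\<in>{0..<b}. S \<subseteq> F j}"
    have finS: "finite S" using S(1) finite_subset by blast
    have "(\<Sum>x\<in>{0..<v} - S. card {j\<in>Q. x \<in> F j}) = (\<Sum>j\<in>Q. card {x\<in>{0..<v} - S. x \<in> F j})"
      by (rule card_swap) (auto simp: Q_def)
    moreover have "(\<Sum>x\<in>{0..<v} - S. card {j\<in>Q. x \<in> F j}) = (v - n) * c"
    proof -
      have "card {j\<in>Q. x \<in> F j} = c" if "x \<in> {0..<v} - S" for x
      proof -
        have "{j\<in>Q. x \<in> F j} = {j\<in>{0..<b}. insert x S \<subseteq> F j}" unfolding Q_def by auto
        moreover have "card (insert x S) = Suc n" using that S finS by simp
        moreover have "insert x S \<subseteq> {0..<v}" using that S by auto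
        ultimately show ?thesis using c[rule_format, of "insert x S"] by simp
      qed
      then have "(\<Sum>x\<in>{0..<v} - S. card {j\<in>Q. x \<in> F j}) = (\<Sum>x\<in>{0..<v} - S. c)" by simp
      also have "\<dots> = card ({0..<v} - S) * c" by simp
      also have "card ({0..<v} - S) = v - n" using S finS by (simp add: card_Diff_subset)
      finally show ?thesis .
    qed
    moreover have "(\<Sum>j\<in>Q. card {x\<in>{0..<v} - S. x \<in> F j}) = card Q * (k - n)"
    proof -
      have "card {x\<in>{0..<v} - S. x \<in> F j} = k - n" if "j \<in> Q" for j
      proof -
        have jb: "j < b" "S \<subseteq> F j" using that unfolding Q_def by auto
        have "{x\<in>{0..<v} - S. x \<in> F j} = F j - S" using Fsub[OF jb(1)] by auto
        then show ?thesis using jb Fcard finS S(2) by (simp add: card_Diff_subset)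
      qed
      then show ?thesis by simp
    qed
    ultimately have eq: "card Q * (k - n) = (v - n) * c" by simp
    have pos: "k - n > 0" using step.hyps tk by simp
    have "(v - n) * c div (k - n) = card Q * (k - n) div (k - n)" using eq by simp
    also have "\<dots> = card Q" using pos by simp
    finally show ?thesis unfolding Q_def by simp
  qed
  then show ?case by blast
qed

lemma cons_const:
  assumes "a + r \<le> t"
  shows "\<exists>c. \<forall>A R. A \<subseteq> {0..<v} \<longrightarrow> R \<subseteq> {0..<v} \<longrightarrow> A \<inter> R = {} \<longrightarrow>
             card A = a \<longrightarrow> card R = r \<longrightarrow> card (cons A R) = c"
  using assms
proof (induction r arbitrary: a)
  case 0
  have "a \<le> t" using 0 by simp
  then obtain c where c: "\<forall>S. S \<subseteq> {0..<v} \<longrightarrow> card S = a \<longrightarrow> card {j\<in>{0..<b}. S \<subseteq> F j} = c"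
    using sub_const by blast
  have "card (cons A R) = c" if "A \<subseteq> {0..<v}" "R \<subseteq> {0..<v}" "card A = a" "card R = 0" for A R
  proof -
    have "R = {}" using that(4) rev_finite_subset[OF finite_atLeastLessThan that(2)] by simp
    then have "cons A R = {j\<in>{0..<b}. A \<subseteq> F j}" unfolding cons_def by auto
    then show ?thesis using c[rule_format, of A] that by simp
  qed
  then show ?case by (intro exI[of _ c]) blast
next
  case (Suc r)
  have h1: "a + r \<le> t" and h2: "Suc a + r \<le> t" using Suc.prems by simp_all
  obtain c1 where c1: "\<forall>A R. A \<subseteq> {0..<v} \<longrightarrow> R \<subseteq> {0..<v} \<longrightarrow> A \<inter> R = {} \<longrightarrow>
             card A = a \<longrightarrow> card R = r \<longrightarrow> card (cons A R) = c1"
    using Suc.IH[OF h1] by blast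
  obtain c2 where c2: "\<forall>A R. A \<subseteq> {0..<v} \<longrightarrow> R \<subseteq> {0..<v} \<longrightarrow> A \<inter> R = {} \<longrightarrow>
             card A = Suc a \<longrightarrow> card R = r \<longrightarrow> card (cons A R) = c2"
    using Suc.IH[OF h2] by blast
  have "card (cons A R) = c1 - c2"
    if AR: "A \<subseteq> {0..<v}" "R \<subseteq> {0..<v}" "A \<inter> R = {}" "card A = a" "card R = Suc r" for A R
  proof -
    have "R \<noteq> {}" using AR(5) by auto
    then obtain x where x: "x \<in> R" by auto
    define R' where "R' = R - {x}"
    have finA: "finite A" "finite R" using rev_finite_subset[OF finite_atLeastLessThan AR(1)] rev_finite_subset[OF finite_atLeastLessThan AR(2)] by auto
    have eq: "cons A R = cons A R' - cons (insert x A) R'" unfolding cons_def R'_def using x by auto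
    have sub: "cons (insert x A) R' \<subseteq> cons A R'" unfolding cons_def by auto
    have cR': "card R' = r" using AR(5) x finA unfolding R'_def by simp
    have "x \<notin> A" using AR(3) x by auto
    then have cxA: "card (insert x A) = Suc a" using AR(4) finA by simp
    have "card (cons A R') = c1" by (rule c1[rule_format]) (use AR cR' in \<open>auto simp: R'_def\<close>)
    moreover have "card (cons (insert x A) R') = c2" by (rule c2[rule_format]) (use AR cR' cxA x in \<open>auto simp: R'_def\<close>)
    moreover have "finite (cons A R')" unfolding cons_def by auto
    ultimately show ?thesis unfolding eq using sub by (simp add: card_Diff_subset finite_subset)
  qed
  then show ?case by (intro exI[of _ "c1 - c2"]) blast
qed

lemma cons_ratio:
  assumes AR: "A \<subseteq> {0..<v}" "R \<subseteq> {0..<v}" "A \<inter> R = {}" "card A + card R + 1 \<le> t"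
    and m: "m \<in> {0..<v} - (A \<union> R)"
  shows "(v - card A - card R) * card (cons (insert m A) R) = (k - card A) * card (cons A R)"
proof -
  have finA: "finite A" "finite R" using rev_finite_subset[OF finite_atLeastLessThan AR(1)] rev_finite_subset[OF finite_atLeastLessThan AR(2)] by auto
  have h: "Suc (card A) + card R \<le> t" using AR(4) by simp
  obtain c where c: "\<forall>A' R'. A' \<subseteq> {0..<v} \<longrightarrow> R' \<subseteq> {0..<v} \<longrightarrow> A' \<inter> R' = {} \<longrightarrow>
             card A' = Suc (card A) \<longrightarrow> card R' = card R \<longrightarrow> card (cons A' R') = c"
    using cons_const[OF h] by blast
  have cm: "card (cons (insert m' A) R) = c" if mm: "m' \<in> {0..<v} - (A \<union> R)" for m'
  proof -
    have "m' \<notin> A" using mm by auto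
    then have c1: "card (insert m' A) = Suc (card A)" using finA by simp
    have c2: "insert m' A \<subseteq> {0..<v}" using mm AR(1) by auto
    have c3: "insert m' A \<inter> R = {}" using mm AR(3) by auto
    show ?thesis using c[rule_format, OF c2 AR(2) c3 c1] by simp
  qed
  define P where "P = {0..<v} - (A \<union> R)"
  have "(\<Sum>m'\<in>P. card {j\<in>cons A R. m' \<in> F j}) = (\<Sum>j\<in>cons A R. card {m'\<in>P. m' \<in> F j})"
    by (rule card_swap) (auto simp: P_def cons_def)
  moreover have "(\<Sum>m'\<in>P. card {j\<in>cons A R. m' \<in> F j}) = card P * c"
  proof -
    have "{j\<in>cons A R. m' \<in> F j} = cons (insert m' A) R" for m' unfolding cons_def by auto
    then have "(\<Sum>m'\<in>P. card {j\<in>cons A R. m' \<in> F j}) = (\<Sum>m'\<in>P. c)"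
      using cm unfolding P_def by (intro sum.cong) auto
    then show ?thesis by simp
  qed
  moreover have "card P = v - card A - card R"
  proof -
    have "card P = v - card (A \<union> R)" unfolding P_def using AR finA by (simp add: card_Diff_subset)
    moreover have "card (A \<union> R) = card A + card R" using AR(3) finA by (simp add: card_Un_disjoint)
    ultimately show ?thesis by simp
  qed
  moreover have "(\<Sum>j\<in>cons A R. card {m'\<in>P. m' \<in> F j}) = card (cons A R) * (k - card A)"
  proof -
    have "card {m'\<in>P. m' \<in> F j} = k - card A" if "j \<in> cons A R" for j
    proof -
      have jb: "j < b" "A \<subseteq> F j" "F j \<inter> R = {}" using that unfolding cons_def by auto
      have "{m'\<in>P. m' \<in> F j} = F j - A" using Fsub[OF jb(1)] jb unfolding P_def by auto
      then show ?thesis using jb Fcard finA by (simp add: card_Diff_subset)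
    qed
    then have "(\<Sum>j\<in>cons A R. card {m'\<in>P. m' \<in> F j}) = (\<Sum>j\<in>cons A R. k - card A)"
      by (intro sum.cong) auto
    then show ?thesis by simp
  qed
  moreover have "card (cons (insert m A) R) = c" using cm m by simp
  ultimately have "card P * c = card (cons A R) * (k - card A)" "card (cons (insert m A) R) = c"
    "card P = v - card A - card R" by argo+
  then show ?thesis by (simp only: mult.commute)
qed

end

lemma arith_int: "(n::int)*s1 = k*f1 \<Longrightarrow> n*s2 = (k+1)*f2 \<Longrightarrow> (n+1)*f1 = (k+1)*(f1+f2) \<Longrightarrow>
   n*((n+1)*(s1+s2)) = n*((k+1)*(f1+f2))"
  by algebra

lemma arith_step:
  fixes N K S1 S2 F1 F2 :: nat
  assumes "N \<ge> 2" "K \<ge> 1" "(N-1)*S1 = (K-1)*F1" "(N-1)*S2 = K*F2" "N*F1 = K*(F1+F2)"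
  shows "N*(S1+S2) = K*(F1+F2)"
proof -
  define n where "n = N - 1"
  define k where "k = K - 1"
  have N: "N = n + 1" and K: "K = k + 1" and n1: "n \<ge> 1" using assms(1,2) by (simp_all add: n_def k_def)
  have "n*S1 = k*F1" using assms(3) by (simp add: n_def k_def)
  then have h1: "int n * int S1 = int k * int F1" by (metis of_nat_mult of_nat_add of_nat_1)
  have "n*S2 = (k+1)*F2" using assms(4) K by (simp add: n_def)
  then have h2: "int n * int S2 = (int k + 1) * int F2" by (metis of_nat_mult of_nat_add of_nat_1)
  have "(n+1)*F1 = (k+1)*(F1+F2)" using assms(5) N K by simp
  then have h3: "(int n + 1) * int F1 = (int k + 1) * (int F1 + int F2)" by (metis of_nat_mult of_nat_add of_nat_1)
  have "int n * ((int n + 1) * (int S1 + int S2)) = int n * ((int k + 1) * (int F1 + int F2))"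
    using arith_int[OF h1 h2 h3] .
  then have "(int n + 1) * (int S1 + int S2) = (int k + 1) * (int F1 + int F2)" using n1 by simp
  then have "int (N*(S1+S2)) = int (K*(F1+F2))" unfolding N K by (metis of_nat_mult of_nat_add of_nat_1)
  then show ?thesis by (simp only: of_nat_eq_iff)
qed

lemma vhist_Cons:
  "vhist q A (Suc n) = (q [], q [] \<in> A) # vhist (\<lambda>h. q ((q [], q [] \<in> A) # h)) A n"
  by (induction n) auto

lemma out_Cons:
  "offline_out q A (Suc n) = offline_out (\<lambda>h. q ((q [], q [] \<in> A) # h)) A n"
  unfolding offline_out_def by (simp only: vhist_Cons)

lemma queries_Cons:
  "fst ` set (vhist q A (Suc n)) = insert (q []) (fst ` set (vhist (\<lambda>h. q ((q [], q [] \<in> A) # h)) A n))"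
  by (simp only: vhist_Cons) simp

context idesign
begin

lemma mart:
  "\<And>A R q. A \<subseteq> {0..<v} \<Longrightarrow> R \<subseteq> {0..<v} \<Longrightarrow> A \<inter> R = {} \<Longrightarrow> card A + card R + i + 1 \<le> t \<Longrightarrow>
   (\<forall>h. q h \<in> {0..<v}) \<Longrightarrow>
   (\<forall>j\<in>cons A R. offline_out q (F j) i \<notin> A \<union> R \<union> fst ` set (vhist q (F j) i)) \<Longrightarrow>
   (v - card A - card R) * card {j\<in>cons A R. offline_out q (F j) i \<in> F j} = (k - card A) * card (cons A R)"
proof (induction i)
  case (0 A R q)
  show ?case
  proof (cases "cons A R = {}")
    case True then show ?thesis by simp
  next
    case False
    then obtain j0 where "j0 \<in> cons A R" by auto
    then have m: "q [] \<in> {0..<v} - (A \<union> R)" using "0.prems"(5,6) unfolding offline_out_def by auto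
    have "{j\<in>cons A R. offline_out q (F j) 0 \<in> F j} = cons (insert (q []) A) R"
      unfolding offline_out_def cons_def by auto
    then show ?thesis using cons_ratio[OF "0.prems"(1-3) _ m] "0.prems"(4) by simp
  qed
next
  case (Suc i A R q)
  define m0 where "m0 = q []"
  define qT where "qT = (\<lambda>h. q ((m0, True) # h))"
  define qF where "qF = (\<lambda>h. q ((m0, False) # h))"
  have qTv: "\<forall>h. qT h \<in> {0..<v}" and qFv: "\<forall>h. qF h \<in> {0..<v}" using Suc.prems(5) unfolding qT_def qF_def by auto
  have inT: "offline_out q X (Suc i) = offline_out qT X i \<and>
     fst ` set (vhist q X (Suc i)) = insert m0 (fst ` set (vhist qT X i))" if "m0 \<in> X" for X
    using that out_Cons[of q X i] queries_Cons[of q X i] unfolding qT_def m0_def by simp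
  have inF: "offline_out q X (Suc i) = offline_out qF X i \<and>
     fst ` set (vhist q X (Suc i)) = insert m0 (fst ` set (vhist qF X i))" if "m0 \<notin> X" for X
    using that out_Cons[of q X i] queries_Cons[of q X i] unfolding qF_def m0_def by simp
  have budget: "card A + card R + i + 1 \<le> t" using Suc.prems(4) by simp
  have m0v: "m0 \<in> {0..<v}" using Suc.prems(5) unfolding m0_def by auto
  consider (a) "m0 \<in> A" | (r) "m0 \<in> R" | (n) "m0 \<notin> A \<union> R" by blast
  then show ?case
  proof cases
    case a
    have jin: "m0 \<in> F j" if "j \<in> cons A R" for j using that a unfolding cons_def by auto
    have cond: "\<forall>j\<in>cons A R. offline_out qT (F j) i \<notin> A \<union> R \<union> fst ` set (vhist qT (F j) i)"
    proof
      fix j assume j: "j \<in> cons A R"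
      have "offline_out q (F j) (Suc i) \<notin> A \<union> R \<union> fst ` set (vhist q (F j) (Suc i))"
        using Suc.prems(6) j by blast
      then show "offline_out qT (F j) i \<notin> A \<union> R \<union> fst ` set (vhist qT (F j) i)"
        using inT[OF jin[OF j]] by (auto simp del: vhist.simps)
    qed
    have eq: "{j\<in>cons A R. offline_out q (F j) (Suc i) \<in> F j} = {j\<in>cons A R. offline_out qT (F j) i \<in> F j}"
      using inT jin by (auto simp del: vhist.simps)
    show ?thesis unfolding eq by (rule Suc.IH[OF Suc.prems(1-3) budget qTv cond])
  next
    case r
    have jin: "m0 \<notin> F j" if "j \<in> cons A R" for j using that r unfolding cons_def by auto
    have cond: "\<forall>j\<in>cons A R. offline_out qF (F j) i \<notin> A \<union> R \<union> fst ` set (vhist qF (F j) i)"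
    proof
      fix j assume j: "j \<in> cons A R"
      have "offline_out q (F j) (Suc i) \<notin> A \<union> R \<union> fst ` set (vhist q (F j) (Suc i))"
        using Suc.prems(6) j by blast
      then show "offline_out qF (F j) i \<notin> A \<union> R \<union> fst ` set (vhist qF (F j) i)"
        using inF[OF jin[OF j]] by (auto simp del: vhist.simps)
    qed
    have eq: "{j\<in>cons A R. offline_out q (F j) (Suc i) \<in> F j} = {j\<in>cons A R. offline_out qF (F j) i \<in> F j}"
      using inF jin by (auto simp del: vhist.simps)
    show ?thesis unfolding eq by (rule Suc.IH[OF Suc.prems(1-3) budget qFv cond])
  next
    case n
    have finA: "finite A" "finite R" using rev_finite_subset[OF finite_atLeastLessThan Suc.prems(1)] rev_finite_subset[OF finite_atLeastLessThan Suc.prems(2)] by auto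
    define A1 where "A1 = insert m0 A"
    define R2 where "R2 = insert m0 R"
    have cA1: "card A1 = card A + 1" using n finA unfolding A1_def by simp
    have cR2: "card R2 = card R + 1" using n finA unfolding R2_def by simp
    have split: "cons A R = cons A1 R \<union> cons A R2" "cons A1 R \<inter> cons A R2 = {}"
      unfolding cons_def A1_def R2_def by auto
    have sub1: "cons A1 R \<subseteq> cons A R" "cons A R2 \<subseteq> cons A R" using split by auto
    have in1: "m0 \<in> F j" if "j \<in> cons A1 R" for j using that unfolding cons_def A1_def by auto
    have in2: "m0 \<notin> F j" if "j \<in> cons A R2" for j using that unfolding cons_def R2_def by auto
    have cond1: "\<forall>j\<in>cons A1 R. offline_out qT (F j) i \<notin> A1 \<union> R \<union> fst ` set (vhist qT (F j) i)"
    proof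
      fix j assume j: "j \<in> cons A1 R"
      have "offline_out q (F j) (Suc i) \<notin> A \<union> R \<union> fst ` set (vhist q (F j) (Suc i))"
        using Suc.prems(6) sub1(1) j by blast
      then show "offline_out qT (F j) i \<notin> A1 \<union> R \<union> fst ` set (vhist qT (F j) i)"
        using inT[OF in1[OF j]] unfolding A1_def by (auto simp del: vhist.simps)
    qed
    have cond2: "\<forall>j\<in>cons A R2. offline_out qF (F j) i \<notin> A \<union> R2 \<union> fst ` set (vhist qF (F j) i)"
    proof
      fix j assume j: "j \<in> cons A R2"
      have "offline_out q (F j) (Suc i) \<notin> A \<union> R \<union> fst ` set (vhist q (F j) (Suc i))"
        using Suc.prems(6) sub1(2) j by blast
      then show "offline_out qF (F j) i \<notin> A \<union> R2 \<union> fst ` set (vhist qF (F j) i)"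
        using inF[OF in2[OF j]] unfolding R2_def by (auto simp del: vhist.simps)
    qed
    have A1v: "A1 \<subseteq> {0..<v}" "A1 \<inter> R = {}" using Suc.prems(1,3) m0v n unfolding A1_def by auto
    have R2v: "R2 \<subseteq> {0..<v}" "A \<inter> R2 = {}" using Suc.prems(2,3) m0v n unfolding R2_def by auto
    have b1: "card A1 + card R + i + 1 \<le> t" using Suc.prems(4) cA1 by simp
    have b2: "card A + card R2 + i + 1 \<le> t" using Suc.prems(4) cR2 by simp
    have IH1: "(v - card A1 - card R) * card {j\<in>cons A1 R. offline_out qT (F j) i \<in> F j} = (k - card A1) * card (cons A1 R)"
      by (rule Suc.IH[OF A1v(1) Suc.prems(2) A1v(2) b1 qTv cond1])
    have IH2: "(v - card A - card R2) * card {j\<in>cons A R2. offline_out qF (F j) i \<in> F j} = (k - card A) * card (cons A R2)"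
      by (rule Suc.IH[OF Suc.prems(1) R2v(1) R2v(2) b2 qFv cond2])
    have ratio: "(v - card A - card R) * card (cons A1 R) = (k - card A) * card (cons A R)"
      unfolding A1_def by (rule cons_ratio[OF Suc.prems(1-3)]) (use Suc.prems(4) m0v n in auto)
    define S1 where "S1 = card {j\<in>cons A1 R. offline_out qT (F j) i \<in> F j}"
    define S2 where "S2 = card {j\<in>cons A R2. offline_out qF (F j) i \<in> F j}"
    have finc: "finite (cons X Y)" for X Y unfolding cons_def by auto
    have "{j\<in>cons A R. offline_out q (F j) (Suc i) \<in> F j} =
          {j\<in>cons A1 R. offline_out qT (F j) i \<in> F j} \<union> {j\<in>cons A R2. offline_out qF (F j) i \<in> F j}"
      using split(1) inT[OF in1] inF[OF in2] by (auto simp del: vhist.simps)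
    moreover have "card ({j\<in>cons A1 R. offline_out qT (F j) i \<in> F j} \<union> {j\<in>cons A R2. offline_out qF (F j) i \<in> F j})
       = S1 + S2" unfolding S1_def S2_def
      by (rule card_Un_disjoint) (use split(2) finc in auto)
    ultimately have S: "card {j\<in>cons A R. offline_out q (F j) (Suc i) \<in> F j} = S1 + S2" by simp
    have Fsum: "card (cons A R) = card (cons A1 R) + card (cons A R2)"
      using split finc by (simp add: card_Un_disjoint)
    have N2: "v - card A - card R \<ge> 2" using Suc.prems(4) tk kv by simp
    have K1: "k - card A \<ge> 1" using Suc.prems(4) tk by simp
    have e1: "(v - card A - card R - 1) * S1 = (k - card A - 1) * card (cons A1 R)"
      using IH1 cA1 unfolding S1_def by (simp add: diff_diff_add)
    have e2: "(v - card A - card R - 1) * S2 = (k - card A) * card (cons A R2)"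
      using IH2 cR2 unfolding S2_def by (simp add: diff_diff_add)
    have "(v - card A - card R) * (S1 + S2) = (k - card A) * (card (cons A1 R) + card (cons A R2))"
      by (rule arith_step[OF N2 K1 e1 e2]) (use ratio Fsum in simp)
    then show ?thesis using S Fsum by simp
  qed
qed

end

context idesign
begin

lemma degree:
  assumes bv: "b = v * c" and v0: "v > 0" and x: "x < v"
  shows "card {j\<in>{0..<b}. x \<in> F j} = k * c"
proof -
  have "1 \<le> t" using t1 .
  then obtain r where r: "\<forall>S. S \<subseteq> {0..<v} \<longrightarrow> card S = 1 \<longrightarrow> card {j\<in>{0..<b}. S \<subseteq> F j} = r"
    using sub_const by blast
  have rx: "card {j\<in>{0..<b}. y \<in> F j} = r" if "y < v" for y
    using r[rule_format, of "{y}"] that by simp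
  have "(\<Sum>y\<in>{0..<v}. card {j\<in>{0..<b}. y \<in> F j}) = (\<Sum>j\<in>{0..<b}. card {y\<in>{0..<v}. y \<in> F j})"
    by (rule card_swap) auto
  moreover have "(\<Sum>y\<in>{0..<v}. card {j\<in>{0..<b}. y \<in> F j}) = v * r"
    using rx by simp
  moreover have "(\<Sum>j\<in>{0..<b}. card {y\<in>{0..<v}. y \<in> F j}) = b * k"
  proof -
    have "card {y\<in>{0..<v}. y \<in> F j} = k" if "j < b" for j
    proof -
      have "{y\<in>{0..<v}. y \<in> F j} = F j" using Fsub[OF that] by auto
      then show ?thesis using Fcard[OF that] by simp
    qed
    then show ?thesis by simp
  qed
  ultimately have "v * r = v * (c * k)" using bv by (simp add: mult.assoc mult.commute mult.left_commute)
  then have "r = c * k" using v0 by simp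
  then show ?thesis using rx[OF x] by (simp add: mult.commute)
qed

lemma design_count: "b * (k choose t) = lam * (v choose t)"
proof -
  define P where "P = {T. T \<subseteq> {0..<v} \<and> card T = t}"
  have finP: "finite P" unfolding P_def by (rule finite_subset[of _ "Pow {0..<v}"]) auto
  have "(\<Sum>T\<in>P. card {j\<in>{0..<b}. T \<subseteq> F j}) = (\<Sum>j\<in>{0..<b}. card {T\<in>P. T \<subseteq> F j})"
    by (rule card_swap[OF finP]) auto
  moreover have "(\<Sum>T\<in>P. card {j\<in>{0..<b}. T \<subseteq> F j}) = (v choose t) * lam"
  proof -
    have "(\<Sum>T\<in>P. card {j\<in>{0..<b}. T \<subseteq> F j}) = (\<Sum>T\<in>P. lam)"
      using Fdes unfolding P_def by (intro sum.cong) auto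
    moreover have "card P = v choose t" unfolding P_def using n_subsets[of "{0..<v}" t] by simp
    ultimately show ?thesis by simp
  qed
  moreover have "(\<Sum>j\<in>{0..<b}. card {T\<in>P. T \<subseteq> F j}) = b * (k choose t)"
  proof -
    have "card {T\<in>P. T \<subseteq> F j} = k choose t" if "j < b" for j
    proof -
      have "{T\<in>P. T \<subseteq> F j} = {T. T \<subseteq> F j \<and> card T = t}" unfolding P_def using Fsub[OF that] by auto
      then show ?thesis using n_subsets[OF finF[OF that], of t] Fcard[OF that] by simp
    qed
    then have "(\<Sum>j\<in>{0..<b}. card {T\<in>P. T \<subseteq> F j}) = (\<Sum>j\<in>{0..<b}. k choose t)"
      by (intro sum.cong) auto
    then show ?thesis by simp
  qed
  ultimately show ?thesis by (simp add: mult.commute)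
qed

lemma secure:
  assumes q: "\<forall>h. q h \<in> {0..<v}"
    and d: "\<forall>j<b. offline_out q (F j) (t - 1) \<notin> fst ` set (vhist q (F j) (t - 1))"
  shows "v * card {j\<in>{0..<b}. offline_out q (F j) (t - 1) \<in> F j} = k * b"
proof -
  have c0: "cons {} {} = {0..<b}" unfolding cons_def by auto
  have "(v - card ({}::nat set) - card ({}::nat set)) * card {j\<in>cons {} {}. offline_out q (F j) (t - 1) \<in> F j} = (k - card ({}::nat set)) * card (cons {} {})"
    by (rule mart[where i="t - 1"]) (use q d t1 c0 in auto)
  then show ?thesis unfolding c0 by simp
qed

end

lemma vhist_len: "length (vhist q A n) = n"
  by (induction n) auto

lemma vhist_q0:
  assumes "n \<le> v"
  shows "fst ` set (vhist (\<lambda>h. if length h < v then length h else 0) A n) = {0..<n}"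
  using assms
proof (induction n)
  case 0 then show ?case by simp
next
  case (Suc n)
  have "length (vhist (\<lambda>h. if length h < v then length h else 0) A n) = n" by (rule vhist_len)
  then show ?case using Suc by (auto simp: atLeast0_lessThan_Suc)
qed

theorem mainTheorem5:
  fixes t v k lam :: nat and X :: "'a set" and B :: "'a set set"
  assumes "1 \<le> t" "t \<le> k" "k \<le> v" "1 \<le> lam"
    and "is_design t v k lam X B"
    and "v dvd card B"
  shows "\<exists>(S::nat set) (M::nat set) (E::nat set) (enc :: nat \<Rightarrow> nat \<Rightarrow> nat).
           auth_system S M E enc \<and> card S = k \<and> card M = v \<and> card E = card B \<and>
           perfect_secrecy S M E enc (\<lambda>s. 1 / real (card S)) (\<lambda>e. 1 / real (card E)) \<and>
           V_secure S M E enc (\<lambda>e. 1 / real (card E)) (t - 1) \<and>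
           (real (card E) = real (v choose t) / real (k choose t) \<longleftrightarrow> lam = 1)"
proof -
  note des = assms(5)[unfolded is_design_def]
  have finX: "finite X" and cX: "card X = v" and Bs: "\<forall>Bl\<in>B. Bl \<subseteq> X \<and> card Bl = k"
    and Bd: "\<forall>T. T \<subseteq> X \<and> card T = t \<longrightarrow> card {Bl\<in>B. T \<subseteq> Bl} = lam" using des by auto
  have "B \<subseteq> Pow X" using Bs by auto
  then have finB: "finite B" using finX by (simp add: finite_subset)
  define b where "b = card B"
  obtain c where bv: "b = v * c" using assms(6) unfolding b_def by auto
  obtain g where g: "bij_betw g X {0..<v}" using ex_bij_betw_finite_nat[OF finX] cX by auto
  obtain idx where idx: "bij_betw idx {0..<b} B" using ex_bij_betw_nat_finite[OF finB] b_def by auto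
  define F where "F = (\<lambda>j. g ` idx j)"
  have idxB: "idx j \<in> B" if "j < b" for j using idx that by (auto simp: bij_betw_def)
  have ginj: "inj_on g X" using g by (simp add: bij_betw_def)
  have gim: "g ` X = {0..<v}" using g by (simp add: bij_betw_def)
  interpret D: idesign t v k lam b F
  proof
    show "1 \<le> t" "t \<le> k" "k \<le> v" using assms by auto
    fix j assume j: "j < b"
    have sub: "idx j \<subseteq> X" using Bs idxB[OF j] by auto
    show "F j \<subseteq> {0..<v}" unfolding F_def using sub gim by auto
    show "card (F j) = k" unfolding F_def using card_image[OF inj_on_subset[OF ginj sub]] Bs idxB[OF j] by simp
  next
    fix T assume T: "T \<subseteq> {0..<v}" "card T = t"
    define T0 where "T0 = inv_into X g ` T"
    have TgX: "T \<subseteq> g ` X" using T(1) gim by simp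
    have T0X: "T0 \<subseteq> X" unfolding T0_def
    proof
      fix y assume "y \<in> inv_into X g ` T"
      then obtain x where x: "x \<in> T" "y = inv_into X g x" by auto
      then have "x \<in> g ` X" using TgX by auto
      then show "y \<in> X" using x(2) by (simp add: inv_into_into)
    qed
    have gT0: "g ` T0 = T" unfolding T0_def using T(1) gim by (simp add: image_inv_into_cancel)
    have cT0: "card T0 = t" using card_image[OF inj_on_subset[OF ginj T0X]] gT0 T(2) by simp
    have iff: "T \<subseteq> F j \<longleftrightarrow> T0 \<subseteq> idx j" if j: "j < b" for j
    proof
      assume "T0 \<subseteq> idx j" then show "T \<subseteq> F j" unfolding F_def using gT0 by auto
    next
      assume a: "T \<subseteq> F j"
      have sub: "idx j \<subseteq> X" using Bs idxB[OF j] by auto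
      show "T0 \<subseteq> idx j"
      proof
        fix x assume x: "x \<in> T0"
        then have "g x \<in> T" using gT0 by auto
        then have "g x \<in> g ` idx j" using a unfolding F_def by auto
        then obtain z where z: "z \<in> idx j" "g x = g z" by auto
        then show "x \<in> idx j" using ginj x T0X sub by (metis inj_on_def subsetD)
      qed
    qed
    have "{j\<in>{0..<b}. T \<subseteq> F j} = {j\<in>{0..<b}. T0 \<subseteq> idx j}" using iff by auto
    moreover have "idx ` {j\<in>{0..<b}. T0 \<subseteq> idx j} = {Bl\<in>B. T0 \<subseteq> Bl}"
      using idx by (auto simp: bij_betw_def)
    moreover have "inj_on idx {j\<in>{0..<b}. T0 \<subseteq> idx j}"
      using idx by (auto simp: bij_betw_def intro: inj_on_subset)
    ultimately have "card {j\<in>{0..<b}. T \<subseteq> F j} = card {Bl\<in>B. T0 \<subseteq> Bl}"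
      by (metis card_image)
    then show "card {j\<in>{0..<b}. T \<subseteq> F j} = lam" using Bd T0X cT0 by simp
  qed
  have v0: "v > 0" using assms by simp
  have k0: "k > 0" using assms by simp
  have b0: "b > 0"
  proof -
    have "{0..<t} \<subseteq> {0..<v}" "card {0..<t} = t" using assms by auto
    then have "card {j\<in>{0..<b}. {0..<t} \<subseteq> F j} = lam" by (rule D.Fdes)
    then show ?thesis using assms(4) by (cases "b = 0") auto
  qed
  have FF: "\<forall>j<b. F j \<subseteq> {0..<v} \<and> card (F j) = k" using D.Fsub D.Fcard by auto
  have deg: "\<forall>x<v. card {j\<in>{0..<b}. x \<in> F j} = k * c" using D.degree[OF bv v0] by auto
  obtain \<sigma> where \<sigma>: "\<forall>j<b. bij_betw (\<sigma> j) {0..<k} (F j)"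
      "\<forall>x<v. \<forall>s<k. card {j\<in>{0..<b}. \<sigma> j s = x} = c"
    using ordering_exists[of b v k c] FF deg bv by blast
  define S where "S = {0..<k}"
  define M where "M = {0..<v}"
  define E where "E = {0..<b}"
  have valid: "valid_msgs S \<sigma> e = F e" if "e < b" for e
    using \<sigma>(1) that unfolding valid_msgs_def S_def by (simp add: bij_betw_def)
  have cS: "card S = k" and cM: "card M = v" and cE: "card E = b" unfolding S_def M_def E_def by auto
  have auth: "auth_system S M E \<sigma>"
    unfolding auth_system_def S_def M_def E_def using \<sigma>(1) FF
    by (auto simp: bij_betw_def)
  have ps: "perfect_secrecy S M E \<sigma> (\<lambda>s. 1 / real (card S)) (\<lambda>e. 1 / real (card E))"
  proof -
    have pSM: "p_SM S E \<sigma> (\<lambda>s. 1 / real (card S)) (\<lambda>e. 1 / real (card E)) s m = real c / real b * (1 / real k)"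
      if "s \<in> S" "m \<in> M" for s m
    proof -
      have "(\<Sum>e\<in>{e\<in>E. \<sigma> e s = m}. 1 / real (card E)) = real (card {e\<in>E. \<sigma> e s = m}) * (1 / real b)"
        using cE by simp
      also have "card {e\<in>E. \<sigma> e s = m} = c" using \<sigma>(2) that unfolding E_def S_def M_def by auto
      finally show ?thesis unfolding p_SM_def using cS by simp
    qed
    have pM: "p_M S E \<sigma> (\<lambda>s. 1 / real (card S)) (\<lambda>e. 1 / real (card E)) m = real c / real b"
      if "m \<in> M" for m
    proof -
      have "p_M S E \<sigma> (\<lambda>s. 1 / real (card S)) (\<lambda>e. 1 / real (card E)) m = (\<Sum>s\<in>S. real c / real b * (1 / real k))"
        unfolding p_M_def using pSM that by (intro sum.cong) auto
      also have "\<dots> = real c / real b" using cS k0 by simp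
      finally show ?thesis .
    qed
    show ?thesis unfolding perfect_secrecy_def using pSM pM cS by simp
  qed
  have succ: "offline_success S E \<sigma> (\<lambda>e. 1 / real (card E)) (t - 1) q = real k / real v"
    if q: "offline_strategy S M E \<sigma> (t - 1) q" for q
  proof -
    have qv: "\<forall>h. q h \<in> {0..<v}" using q unfolding offline_strategy_def M_def by auto
    have qd: "\<forall>j<b. offline_out q (F j) (t - 1) \<notin> fst ` set (vhist q (F j) (t - 1))"
      using q valid unfolding offline_strategy_def E_def by auto
    have eq: "v * card {j\<in>{0..<b}. offline_out q (F j) (t - 1) \<in> F j} = k * b"
      by (rule D.secure[OF qv qd])
    have "offline_success S E \<sigma> (\<lambda>e. 1 / real (card E)) (t - 1) q =
          (\<Sum>e\<in>{0..<b}. if offline_out q (F e) (t - 1) \<in> F e then 1 / real b else 0)"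
      unfolding offline_success_def E_def using valid cE unfolding E_def by (intro sum.cong) auto
    also have "\<dots> = real (card {j\<in>{0..<b}. offline_out q (F j) (t - 1) \<in> F j}) * (1 / real b)"
      by (simp add: sum.If_cases Int_def)
    also have "\<dots> = real k / real v"
    proof -
      have "real v * real (card {j\<in>{0..<b}. offline_out q (F j) (t - 1) \<in> F j}) = real k * real b"
        using arg_cong[OF eq, of real] by simp
      then show ?thesis using v0 b0 by (simp add: field_simps)
    qed
    finally show ?thesis .
  qed
  define q0 :: "(nat \<times> bool) list \<Rightarrow> nat" where "q0 = (\<lambda>h. if length h < v then length h else 0)"
  have q0s: "offline_strategy S M E \<sigma> (t - 1) q0"
    unfolding offline_strategy_def
  proof (intro conjI allI ballI)
    fix h show "q0 h \<in> M" unfolding q0_def M_def using v0 by auto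
  next
    fix e assume "e \<in> E"
    have tv: "t - 1 < v" using assms by simp
    have "fst ` set (vhist q0 (valid_msgs S \<sigma> e) (t - 1)) = {0..<t - 1}"
      unfolding q0_def by (rule vhist_q0) (use tv in simp)
    moreover have "offline_out q0 (valid_msgs S \<sigma> e) (t - 1) = t - 1"
      unfolding offline_out_def q0_def using tv by (simp add: vhist_len)
    ultimately show "offline_out q0 (valid_msgs S \<sigma> e) (t - 1) \<notin> fst ` set (vhist q0 (valid_msgs S \<sigma> e) (t - 1))"
      by simp
  qed
  have img: "offline_success S E \<sigma> (\<lambda>e. 1 / real (card E)) (t - 1) ` {q. offline_strategy S M E \<sigma> (t - 1) q}
      = {real k / real v}"
  proof
    show "offline_success S E \<sigma> (\<lambda>e. 1 / real (card E)) (t - 1) ` {q. offline_strategy S M E \<sigma> (t - 1) q} \<subseteq> {real k / real v}"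
      using succ by auto
    show "{real k / real v} \<subseteq> offline_success S E \<sigma> (\<lambda>e. 1 / real (card E)) (t - 1) ` {q. offline_strategy S M E \<sigma> (t - 1) q}"
      using succ[OF q0s] q0s by (auto intro!: image_eqI[where x=q0])
  qed
  have vs: "V_secure S M E \<sigma> (\<lambda>e. 1 / real (card E)) (t - 1)"
    unfolding V_secure_def P_offline_def img using cS cM by simp
  have cnt: "b * (k choose t) = lam * (v choose t)" by (rule D.design_count)
  have opt: "real (card E) = real (v choose t) / real (k choose t) \<longleftrightarrow> lam = 1"
  proof -
    have kt: "real (k choose t) > 0" using assms by simp
    have vt: "real (v choose t) > 0" using assms by simp
    have r: "real b * real (k choose t) = real lam * real (v choose t)"
      using arg_cong[OF cnt, of real] by simp
    have "real b = real (v choose t) / real (k choose t) \<longleftrightarrow> real b * real (k choose t) = real (v choose t)"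
      using kt by (simp add: field_simps)
    also have "\<dots> \<longleftrightarrow> real lam * real (v choose t) = 1 * real (v choose t)" using r by simp
    also have "\<dots> \<longleftrightarrow> lam = 1" using vt by simp
    finally show ?thesis using cE by simp
  qed
  have cEB: "card E = card B" using cE b_def by simp
  show ?thesis
    by (rule exI[of _ S], rule exI[of _ M], rule exI[of _ E], rule exI[of _ \<sigma>])
      (intro conjI auth cS cM cEB ps vs opt)
qed

end
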